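(* Let $\sigma$ be a density operator on a finite-dimensional Hilbert space with largest eigenvalue $p_{\max}=\|\sigma\|_\infty<1$ and corresponding eigenvector $|\Phi\rangle$, and let $H$ be Hermitian. Then $$P_H(\sigma)\ge V_H(\Phi)\Big(\frac{p_{\max}^2}{1-p_{\max}}-1\Big).$$
   Context: $V_H(\Phi)=\langle\Phi|H^2|\Phi\rangle-\langle\Phi|H|\Phi\rangle^2$. Purity of coherence: $P_H(\sigma)=\mathrm{Tr}(H\sigma^2H\sigma^{-1})-\mathrm{Tr}(\sigma H^2)$ ($\sigma^{-1}$ inverse on the support) if $\mathrm{supp}(H\sigma H)\subseteq\mathrm{supp}(\sigma)$, else $\infty$. *)

theory Defs
  imports "HOL-Analysis.Analysis"
begin

definition adjoint :: "complex^'n^'m \<Rightarrow> complex^'m^'n" where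
  "adjoint A = (\<chi> i j. cnj (A $ j $ i))"

definition hermitian :: "complex^'n^'n \<Rightarrow> bool" where
  "hermitian A \<longleftrightarrow> adjoint A = A"

definition mtrace :: "complex^'n^'n \<Rightarrow> complex" where
  "mtrace A = (\<Sum>i\<in>UNIV. A $ i $ i)"

text \<open>Sesquilinear inner product, linear in the second argument: braket x y = <x|y>.\<close>
definition braket :: "complex^'n \<Rightarrow> complex^'n \<Rightarrow> complex" where
  "braket x y = (\<Sum>i\<in>UNIV. cnj (x $ i) * y $ i)"

definition positive_semidef :: "complex^'n^'n \<Rightarrow> bool" where
  "positive_semidef A \<longleftrightarrow> hermitian A \<and> (\<forall>x. Im (braket x (A *v x)) = 0 \<and> Re (braket x (A *v x)) \<ge> 0)"

definition density_operator :: "complex^'n^'n \<Rightarrow> bool" where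
  "density_operator \<sigma> \<longleftrightarrow> positive_semidef \<sigma> \<and> mtrace \<sigma> = 1"

definition supp :: "complex^'n^'m \<Rightarrow> (complex^'m) set" where
  "supp A = range (\<lambda>x. A *v x)"

text \<open>Moore--Penrose pseudo-inverse; for Hermitian \<sigma> this is the inverse on the support.\<close>
definition pinv :: "complex^'n^'n \<Rightarrow> complex^'n^'n" where
  "pinv A = (THE X. A ** X ** A = A \<and> X ** A ** X = X \<and>
                    adjoint (A ** X) = A ** X \<and> adjoint (X ** A) = X ** A)"

text \<open>Variance of H in the pure state \<Phi> (normalised vector).\<close>
definition variance :: "complex^'n^'n \<Rightarrow> complex^'n \<Rightarrow> real" where
  "variance H \<Phi> = Re (braket \<Phi> ((H ** H) *v \<Phi>)) - (Re (braket \<Phi> (H *v \<Phi>)))\<^sup>2"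

text \<open>Purity of coherence; the trace expression is real for Hermitian H and density \<sigma>.\<close>
definition purity_coh :: "complex^'n^'n \<Rightarrow> complex^'n^'n \<Rightarrow> ereal" where
  "purity_coh H \<sigma> =
     (if supp (H ** \<sigma> ** H) \<subseteq> supp \<sigma>
      then ereal (Re (mtrace (H ** \<sigma> ** \<sigma> ** H ** pinv \<sigma>) - mtrace (\<sigma> ** H ** H)))
      else \<infinity>)"

end

theory Submission
  imports Defs
begin


lemma adjoint_nth[simp]: "adjoint A $ i $ j = cnj (A $ j $ i)"
  by (simp add: adjoint_def)

lemma adjoint_adjoint[simp]: "adjoint (adjoint A) = A"
  by (simp add: vec_eq_iff)

lemma adjoint_mult: "adjoint (A ** B) = adjoint B ** adjoint A"
  by (simp add: vec_eq_iff matrix_matrix_mult_def mult.commute)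

lemma adjoint_add: "adjoint (A + B) = adjoint A + adjoint B"
  by (simp add: vec_eq_iff)

lemma adjoint_diff: "adjoint (A - B) = adjoint A - adjoint B"
  by (simp add: vec_eq_iff)

lemma adjoint_scaleR: "adjoint (r *\<^sub>R A) = r *\<^sub>R adjoint A"
  by (simp add: vec_eq_iff)

lemma adjoint_mat1[simp]: "adjoint (mat 1 :: complex^'n^'n) = mat 1"
  by (simp add: vec_eq_iff mat_def)

lemma adjoint_zero[simp]: "adjoint (0 :: complex^'n^'m) = 0"
  by (simp add: vec_eq_iff)

lemma braket_adj: "braket x (A *v y) = braket (adjoint A *v x) y"
proof -
  have "braket x (A *v y) = (\<Sum>i\<in>UNIV. \<Sum>j\<in>UNIV. cnj (x$i) * A$i$j * y$j)"
    unfolding braket_def matrix_vector_mult_def by (simp add: sum_distrib_left mult.assoc)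
  also have "\<dots> = (\<Sum>j\<in>UNIV. \<Sum>i\<in>UNIV. cnj (x$i) * A$i$j * y$j)" by (rule sum.swap)
  also have "\<dots> = braket (adjoint A *v x) y"
    unfolding braket_def matrix_vector_mult_def
    by (simp add: sum_distrib_left mult_ac)
  finally show ?thesis .
qed

lemma braket_add_right: "braket x (y + z) = braket x y + braket x z"
  by (simp add: braket_def sum.distrib distrib_left)
lemma braket_add_left: "braket (x + y) z = braket x z + braket y z"
  by (simp add: braket_def sum.distrib distrib_right)
lemma braket_diff_right: "braket x (y - z) = braket x y - braket x z"
  by (simp add: braket_def sum_subtractf right_diff_distrib)
lemma braket_diff_left: "braket (x - y) z = braket x z - braket y z"
  by (simp add: braket_def sum_subtractf left_diff_distrib)
lemma braket_smult_right: "braket x (c *s y) = c * braket x y"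
  by (simp add: braket_def sum_distrib_left mult.left_commute)
lemma braket_smult_left: "braket (c *s x) y = cnj c * braket x y"
  by (simp add: braket_def sum_distrib_left mult.assoc)
lemma braket_zero_right[simp]: "braket x 0 = 0"
  by (simp add: braket_def)
lemma braket_zero_left[simp]: "braket 0 x = 0"
  by (simp add: braket_def)
lemma braket_cnj: "cnj (braket x y) = braket y x"
  by (simp add: braket_def mult.commute)

lemma braket_self: "braket x x = of_real (\<Sum>i\<in>UNIV. (cmod (x $ i))\<^sup>2)"
  unfolding braket_def of_real_sum
  by (rule sum.cong) (simp_all only: complex_norm_square mult.commute)

lemma braket_self_Im[simp]: "Im (braket x x) = 0"
  by (simp add: braket_self)

lemma braket_self_Re: "Re (braket x x) \<ge> 0"
  by (simp add: braket_self sum_nonneg)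

lemma braket_self_real: "braket x x = of_real (Re (braket x x))"
  by (simp add: braket_self)

lemma braket_self_zero: "braket x x = 0 \<Longrightarrow> x = 0"
proof -
  assume "braket x x = 0"
  hence "complex_of_real (\<Sum>i\<in>UNIV. (cmod (x $ i))\<^sup>2) = 0" by (simp only: braket_self)
  hence "(\<Sum>i\<in>UNIV. (cmod (x $ i))\<^sup>2) = 0" using of_real_eq_0_iff by blast
  hence "\<forall>i\<in>UNIV. (cmod (x $ i))\<^sup>2 = 0" by (subst (asm) sum_nonneg_eq_0_iff) auto
  thus "x = 0" by (simp add: vec_eq_iff)
qed

lemma mtrace_comm: "mtrace (A ** B) = mtrace (B ** A)"
proof -
  have "mtrace (A ** B) = (\<Sum>i\<in>UNIV. \<Sum>k\<in>UNIV. A$i$k * B$k$i)"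
    unfolding mtrace_def matrix_matrix_mult_def by simp
  also have "\<dots> = (\<Sum>k\<in>UNIV. \<Sum>i\<in>UNIV. A$i$k * B$k$i)" by (rule sum.swap)
  also have "\<dots> = mtrace (B ** A)"
    unfolding mtrace_def matrix_matrix_mult_def by (simp add: mult.commute)
  finally show ?thesis .
qed

lemma mtrace_add: "mtrace (A + B) = mtrace A + mtrace B"
  by (simp add: mtrace_def sum.distrib)
lemma mtrace_diff: "mtrace (A - B) = mtrace A - mtrace B"
  by (simp add: mtrace_def sum_subtractf)
lemma mtrace_scaleR': "mtrace (r *\<^sub>R A) = r *\<^sub>R mtrace A"
  by (simp add: mtrace_def scaleR_sum_right)
lemma mtrace_scaleR: "mtrace (r *\<^sub>R A) = of_real r * mtrace A"
  unfolding mtrace_scaleR' by (rule scaleR_conv_of_real)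
lemma mtrace_adjoint: "mtrace (adjoint A) = cnj (mtrace A)"
  by (simp add: mtrace_def)

lemma matrix_diff_ldistrib: "(A::complex^'n^'m) ** (B - C) = A ** B - A ** C"
  by (simp add: vec_eq_iff matrix_matrix_mult_def sum_subtractf right_diff_distrib)
lemma matrix_diff_rdistrib: "((A::complex^'n^'m) - B) ** C = A ** C - B ** C"
  by (simp add: vec_eq_iff matrix_matrix_mult_def sum_subtractf left_diff_distrib)
lemma matrix_add_rdistrib: "((A::complex^'n^'m) + B) ** C = A ** C + B ** C"
  by (simp add: vec_eq_iff matrix_matrix_mult_def sum.distrib distrib_right)

lemma matrix_vector_scaleR: "(A::complex^'n^'m) *v (r *\<^sub>R x) = r *\<^sub>R (A *v x)"
  by (simp add: vec_eq_iff matrix_vector_mult_def scaleR_sum_right)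
lemma matrix_vector_smult: "(A::complex^'n^'m) *v (c *s x) = c *s (A *v x)"
  by (simp add: vec_eq_iff matrix_vector_mult_def sum_distrib_left mult.left_commute)
lemma scaleR_matrix_vector: "(r *\<^sub>R (A::complex^'n^'m)) *v x = r *\<^sub>R (A *v x)"
  by (simp add: vec_eq_iff matrix_vector_mult_def scaleR_sum_right)

definition outer :: "complex^'n \<Rightarrow> complex^'n \<Rightarrow> complex^'n^'n" where
  "outer u v = (\<chi> i j. u $ i * cnj (v $ j))"

lemma outer_mv: "outer u v *v x = braket v x *s u"
  unfolding outer_def matrix_vector_mult_def braket_def
  by (simp add: vec_eq_iff sum_distrib_left mult.commute mult.left_commute)

lemma adjoint_outer: "adjoint (outer u v) = outer v u"
  by (simp add: outer_def vec_eq_iff)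

lemma mtrace_outer_mult: "mtrace (outer u v ** M) = braket v (M *v u)"
proof -
  have "mtrace (outer u v ** M) = (\<Sum>i\<in>UNIV. \<Sum>k\<in>UNIV. cnj (v$k) * (M$k$i * u$i))"
    unfolding mtrace_def outer_def matrix_matrix_mult_def
    by (simp add: sum_distrib_left mult_ac)
  also have "\<dots> = (\<Sum>k\<in>UNIV. \<Sum>i\<in>UNIV. cnj (v$k) * (M$k$i * u$i))" by (rule sum.swap)
  also have "\<dots> = braket v (M *v u)"
    unfolding braket_def matrix_vector_mult_def by (simp add: sum_distrib_left)
  finally show ?thesis .
qed

lemma mult_outer: "M ** outer u v = outer (M *v u) v"
  unfolding outer_def matrix_matrix_mult_def matrix_vector_mult_def
  by (simp add: vec_eq_iff sum_distrib_right mult.assoc)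

lemma mtrace_outer: "mtrace (outer u v) = braket v u"
  unfolding mtrace_def outer_def braket_def by (simp add: mult.commute)




lemma herm_form_cnj:
  assumes "hermitian M"
  shows "cnj (braket x (M *v y)) = braket y (M *v x)"
proof -
  have "cnj (braket x (M *v y)) = braket (M *v y) x" by (simp add: braket_cnj)
  also have "\<dots> = braket y (M *v x)"
    using assms by (simp add: braket_adj hermitian_def)
  finally show ?thesis .
qed

lemma herm_form_real:
  assumes "hermitian M"
  shows "braket x (M *v x) = of_real (Re (braket x (M *v x)))"
  using herm_form_cnj[OF assms, of x x] by (simp add: complex_eq_iff)

lemma real_cs_aux:
  fixes a S c :: real
  assumes "\<forall>r. 0 \<le> a - 2*r*S + r^2*S*c" "S \<ge> 0" "c \<ge> 0"
  shows "S \<le> a*c"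
proof (cases "c = 0")
  case True
  show ?thesis
  proof (rule ccontr)
    assume "\<not> S \<le> a * c"
    hence S: "S > 0" using True by simp
    have "0 \<le> a - 2*((\<bar>a\<bar>+1)/(2*S))*S + ((\<bar>a\<bar>+1)/(2*S))^2*S*c" using assms(1) by blast
    also have "\<dots> = a - (\<bar>a\<bar>+1)" using S True by (simp add: field_simps)
    finally show False by linarith
  qed
next
  case False
  hence c: "c > 0" using assms by simp
  have "0 \<le> a - 2*(1/c)*S + (1/c)^2*S*c" using assms(1) by blast
  also have "\<dots> = a - S/c" using c by (simp add: power2_eq_square field_simps)
  finally have "S/c \<le> a" by simp
  thus ?thesis using c by (simp add: field_simps mult.commute)
qed

lemma sq_cmod: "s * cnj s = (complex_of_real (cmod s))^2"
  by (simp only: complex_norm_square[symmetric] of_real_power)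

lemma form_expand: "braket (x + t *s y) (M *v (x + t *s y)) = braket x (M *v x) + t * braket x (M *v y) + cnj t * braket y (M *v x)
          + cnj t * t * braket y (M *v y)"
  apply (simp only: matrix_vector_right_distrib matrix_vector_smult braket_add_left
          braket_add_right braket_smult_left braket_smult_right distrib_left)
  by (simp only: add_ac mult_ac)

lemma psd_cs:
  assumes h: "hermitian M" and p: "\<forall>x. Re (braket x (M *v x)) \<ge> 0"
  shows "(cmod (braket x (M *v y)))\<^sup>2 \<le> Re (braket x (M *v x)) * Re (braket y (M *v y))"
proof -
  define s where "s = braket x (M *v y)"
  define a where "a = Re (braket x (M *v x))"
  define c where "c = Re (braket y (M *v y))"
  have "\<forall>r. 0 \<le> a - 2*r*(cmod s)^2 + r^2*(cmod s)^2*c"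
  proof
    fix r :: real
    define t where "t = - (of_real r * cnj s)"
    define z where "z = x + t *s y"
    have "braket z (M *v z) = braket x (M *v x) + t * braket x (M *v y) + cnj t * braket y (M *v x)
          + cnj t * t * braket y (M *v y)"
      unfolding z_def by (rule form_expand)
    also have "braket y (M *v x) = cnj s" unfolding s_def using herm_form_cnj[OF h] by simp
    also have "braket x (M *v x) = of_real a" unfolding a_def by (rule herm_form_real[OF h])
    also have "braket y (M *v y) = of_real c" unfolding c_def by (rule herm_form_real[OF h])
    finally have e: "braket z (M *v z) = of_real a + t * s + cnj t * cnj s + cnj t * t * of_real c"
      by (simp add: s_def)
    have ts: "t * s = - of_real (r * (cmod s)^2)"
      unfolding t_def by (simp add: sq_cmod mult.commute mult.left_commute)
    have tt: "cnj t * t = of_real (r^2 * (cmod s)^2)"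
      unfolding t_def by (simp add: power2_eq_square mult_ac sq_cmod)
    have "Re (braket z (M *v z)) = a - 2*r*(cmod s)^2 + r^2*(cmod s)^2*c"
    proof -
      have "cnj t * cnj s = cnj (t * s)" by simp
      hence "Re (braket z (M *v z)) = a + Re (t * s) + Re (cnj (t * s)) + Re (cnj t * t * of_real c)"
        using e by simp
      also have "\<dots> = a - 2*r*(cmod s)^2 + r^2*(cmod s)^2*c" using ts tt by simp
      finally show ?thesis .
    qed
    thus "0 \<le> a - 2*r*(cmod s)^2 + r^2*(cmod s)^2*c" using p by metis
  qed
  moreover have "c \<ge> 0" unfolding c_def using p by blast
  ultimately have "(cmod s)^2 \<le> a * c" by (intro real_cs_aux) auto
  thus ?thesis unfolding s_def a_def c_def .
qed

lemma hermitian_mat1: "hermitian (mat 1 :: complex^'n^'n)"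
  by (simp add: hermitian_def)

lemma braket_cs: "(cmod (braket x y))\<^sup>2 \<le> Re (braket x x) * Re (braket y y)"
  using psd_cs[OF hermitian_mat1, of x y] by (simp add: braket_self_Re)

lemma psd_null:
  assumes h: "hermitian M" and p: "\<forall>x. Re (braket x (M *v x)) \<ge> 0"
    and z: "Re (braket v (M *v v)) = 0"
  shows "M *v v = 0"
proof -
  have "(cmod (braket (M *v v) (M *v v)))\<^sup>2 \<le> 0"
    using psd_cs[OF h p, of "M *v v" v] z by simp
  hence "braket (M *v v) (M *v v) = 0" by simp
  thus ?thesis by (rule braket_self_zero)
qed

lemma braket_axis: "braket (axis i 1) y = y $ i"
  unfolding braket_def axis_def by (simp add: if_distrib if_distribR cong: if_cong)

lemma mv_axis: "(M *v axis i 1) $ j = M $ j $ i"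
  unfolding matrix_vector_mult_def axis_def by (simp add: if_distrib if_distribR cong: if_cong)

lemma psd_trace_bound:
  assumes h: "hermitian M" and p: "\<forall>x. Re (braket x (M *v x)) \<ge> 0"
  shows "Re (braket x (M *v x)) \<le> Re (mtrace M) * Re (braket x x)"
proof -
  define q where "q = Re (braket x (M *v x))"
  have q0: "q \<ge> 0" unfolding q_def using p by blast
  have "q^2 = (cmod (braket x (M *v x)))^2"
    unfolding q_def by (subst herm_form_real[OF h]) simp
  also have "\<dots> \<le> Re (braket x x) * Re (braket (M *v x) (M *v x))" by (rule braket_cs)
  also have "Re (braket (M *v x) (M *v x)) = (\<Sum>i\<in>UNIV. (cmod ((M *v x) $ i))\<^sup>2)"
    by (simp add: braket_self)
  also have "\<dots> \<le> (\<Sum>i\<in>UNIV. Re (M $ i $ i) * q)"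
  proof (rule sum_mono)
    fix i
    have "(cmod ((M *v x) $ i))\<^sup>2 = (cmod (braket (axis i 1) (M *v x)))\<^sup>2" by (simp add: braket_axis)
    also have "\<dots> \<le> Re (braket (axis i 1) (M *v axis i 1)) * q"
      unfolding q_def by (rule psd_cs[OF h p])
    also have "braket (axis i 1) (M *v axis i 1) = M $ i $ i" by (simp add: braket_axis mv_axis)
    finally show "(cmod ((M *v x) $ i))\<^sup>2 \<le> Re (M $ i $ i) * q" .
  qed
  also have "(\<Sum>i\<in>UNIV. Re (M $ i $ i) * q) = Re (mtrace M) * q"
    by (simp add: mtrace_def sum_distrib_right)
  finally have "q^2 \<le> Re (braket x x) * (Re (mtrace M) * q)"
    using braket_self_Re[of x] by (simp add: mult_left_mono)
  hence "q * q \<le> (Re (braket x x) * Re (mtrace M)) * q" by (simp add: power2_eq_square mult_ac)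
  hence "q \<le> Re (braket x x) * Re (mtrace M)" if "q > 0" using that by simp
  moreover have "Re (mtrace M) \<ge> 0"
    unfolding mtrace_def Re_sum
  proof (rule sum_nonneg)
    fix i
    have "Re (braket (axis i 1) (M *v axis i 1)) \<ge> 0" using p by blast
    thus "Re (M $ i $ i) \<ge> 0" by (simp add: braket_axis mv_axis)
  qed
  ultimately show ?thesis using q0 braket_self_Re[of x] unfolding q_def[symmetric]
    by (cases "q > 0") (auto simp: mult.commute)
qed




fun mpow :: "complex^'n^'n \<Rightarrow> nat \<Rightarrow> complex^'n^'n" where
  "mpow A 0 = mat 1" | "mpow A (Suc k) = A ** mpow A k"

lemma mpow_add: "mpow A (i + j) = mpow A i ** mpow A j"
  by (induct i) (simp_all add: matrix_mul_assoc)

lemma mpow_comm: "A ** mpow A k = mpow A k ** A"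
proof (induct k)
  case 0 show ?case by simp
next
  case (Suc k)
  have "A ** mpow A (Suc k) = A ** (mpow A k ** A)" by (simp add: Suc)
  also have "\<dots> = (A ** mpow A k) ** A" by (simp add: matrix_mul_assoc)
  finally show ?case by simp
qed

lemma mpow_herm:
  assumes "hermitian A" shows "adjoint (mpow A k) = mpow A k"
proof (induct k)
  case 0 show ?case by simp
next
  case (Suc k)
  have "adjoint (mpow A (Suc k)) = mpow A k ** A"
    using Suc assms by (simp add: adjoint_mult hermitian_def)
  thus ?case by (simp add: mpow_comm)
qed

lemma herm_ker_pow:
  assumes h: "hermitian A"
  shows "mpow A (Suc k) *v v = 0 \<Longrightarrow> A *v v = 0"
proof (induct k rule: less_induct)
  case (less k)
  show ?case
  proof (cases k)
    case 0 thus ?thesis using less.prems by simp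
  next
    case (Suc j)
    define w where "w = mpow A (Suc j) *v v"
    have "braket w w = braket v (mpow A (Suc j) *v w)"
      by (subst braket_adj) (simp only: mpow_herm[OF h] w_def)
    also have "mpow A (Suc j) *v w = mpow A (j + Suc k) *v v"
      unfolding w_def matrix_vector_mul_assoc mpow_add[symmetric] using Suc by simp
    also have "\<dots> = mpow A j *v (mpow A (Suc k) *v v)"
      by (simp only: mpow_add matrix_vector_mul_assoc)
    also have "\<dots> = 0" using less.prems by simp
    finally have "w = 0" by (intro braket_self_zero) simp
    thus ?thesis using less.hyps[of j] Suc unfolding w_def by simp
  qed
qed

lemma pow_dep:
  fixes A :: "complex^'n^'n"
  shows "\<exists>c::nat\<Rightarrow>real. \<exists>N. (\<exists>i. c i \<noteq> 0) \<and> (\<forall>i>N. c i = 0) \<and> (\<Sum>i\<le>N. c i *\<^sub>R mpow A i) = 0"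
proof (cases "inj_on (mpow A) {..DIM(complex^'n^'n)}")
  case True
  define D where "D = DIM(complex^'n^'n)"
  define S where "S = mpow A ` {..D}"
  have fin: "finite S" unfolding S_def by simp
  have "card S = Suc D" unfolding S_def D_def using card_image[OF True] by simp
  hence "DIM(complex^'n^'n) < card S" by (simp add: D_def)
  hence "dependent S" using dependent_biggerset[of S] by blast
  then obtain u where u: "\<exists>v\<in>S. u v \<noteq> 0" "(\<Sum>v\<in>S. u v *\<^sub>R v) = 0"
    using real_vector.dependent_finite[OF fin] by auto
  define c where "c i = (if i \<le> D then u (mpow A i) else 0)" for i
  have "(\<Sum>i\<le>D. c i *\<^sub>R mpow A i) = (\<Sum>i\<le>D. u (mpow A i) *\<^sub>R mpow A i)"
    by (rule sum.cong) (simp_all add: c_def)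
  also have "\<dots> = (\<Sum>v\<in>S. u v *\<^sub>R v)"
    unfolding S_def using sum.reindex[OF True[folded D_def], of "\<lambda>v. u v *\<^sub>R v"] by simp
  finally have "(\<Sum>i\<le>D. c i *\<^sub>R mpow A i) = 0" using u by simp
  moreover obtain i where "i \<le> D" "u (mpow A i) \<noteq> 0" using u(1) unfolding S_def by auto
  hence "c i \<noteq> 0" by (simp add: c_def)
  moreover have "\<forall>i>D. c i = 0" by (simp add: c_def)
  ultimately show ?thesis by blast
next
  case False
  then obtain i j where ij: "i \<noteq> j" "mpow A i = mpow A j" "i \<le> DIM(complex^'n^'n)" "j \<le> DIM(complex^'n^'n)"
    unfolding inj_on_def by auto
  define D where "D = DIM(complex^'n^'n)"
  define c where "c k = (if k = i then 1 else if k = j then -1 else (0::real))" for k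
  have "(\<Sum>k\<le>D. c k *\<^sub>R mpow A k) =
        (\<Sum>k\<le>D. (if k = i then mpow A i else 0) - (if k = j then mpow A j else 0))"
    by (rule sum.cong) (auto simp: c_def ij(1) ij(1)[symmetric])
  also have "\<dots> = mpow A i - mpow A j"
    using ij unfolding D_def by (simp add: sum_subtractf)
  also have "\<dots> = 0" using ij by simp
  finally have "(\<Sum>k\<le>D. c k *\<^sub>R mpow A k) = 0" .
  moreover have "c i \<noteq> 0" by (simp add: c_def)
  moreover have "\<forall>k>D. c k = 0" using ij unfolding c_def D_def by auto
  ultimately show ?thesis by blast
qed

lemma mult_sum_left: "(A::complex^'n^'m) ** sum f S = (\<Sum>i\<in>S. A ** f i)"
  by (induct S rule: infinite_finite_induct) (simp_all add: matrix_add_ldistrib)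

lemma mult_sum_right: "sum f S ** (A::complex^'n^'m) = (\<Sum>i\<in>S. f i ** A)"
  by (induct S rule: infinite_finite_induct) (simp_all add: matrix_add_rdistrib)

lemma mv_sum_left: "sum f S *v (x::complex^'n) = (\<Sum>i\<in>S. f i *v x)"
  by (induct S rule: infinite_finite_induct) (simp_all add: matrix_vector_mult_add_rdistrib)

lemma adjoint_sum: "adjoint (sum f S) = (\<Sum>i\<in>S. adjoint (f i))"
  by (induct S rule: infinite_finite_induct) (simp_all add: adjoint_add)




definition MP :: "complex^'n^'n \<Rightarrow> complex^'n^'n \<Rightarrow> bool" where
  "MP A X \<longleftrightarrow> A ** X ** A = A \<and> X ** A ** X = X \<and>
                    adjoint (A ** X) = A ** X \<and> adjoint (X ** A) = X ** A"

lemma MP_unique: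
  assumes "MP A X" "MP A Z" shows "X = Z"
proof -
  have x1: "A ** X ** A = A" and x2: "X ** A ** X = X" and x3: "adjoint (A ** X) = A ** X"
    and x4: "adjoint (X ** A) = X ** A" using assms(1) unfolding MP_def by auto
  have z1: "A ** Z ** A = A" and z2: "Z ** A ** Z = Z" and z3: "adjoint (A ** Z) = A ** Z"
    and z4: "adjoint (Z ** A) = Z ** A" using assms(2) unfolding MP_def by auto
  have aA1: "adjoint A = adjoint A ** (A ** Z)"
  proof -
    have "adjoint A = adjoint (A ** Z ** A)" using z1 by simp
    also have "\<dots> = adjoint A ** adjoint (A ** Z)" by (simp add: adjoint_mult)
    finally show ?thesis using z3 by simp
  qed
  have aA2: "adjoint A = (X ** A) ** adjoint A"
  proof -
    have "adjoint A = adjoint (A ** X ** A)" using x1 by simp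
    also have "\<dots> = adjoint (X ** A) ** adjoint A" by (simp add: adjoint_mult matrix_mul_assoc)
    finally show ?thesis using x4 by simp
  qed
  have "X = X ** (A ** X)" using x2 by (simp add: matrix_mul_assoc)
  also have "A ** X = adjoint X ** adjoint A" using x3 by (simp add: adjoint_mult)
  also have "adjoint X ** adjoint A = adjoint X ** adjoint A ** (A ** Z)"
    using aA1 by (metis matrix_mul_assoc)
  also have "adjoint X ** adjoint A = A ** X" using x3 by (simp add: adjoint_mult)
  also have "X ** (A ** X ** (A ** Z)) = (X ** A ** X) ** A ** Z" by (simp add: matrix_mul_assoc)
  finally have ex: "X = X ** A ** Z" using x2 by simp
  have "Z = (Z ** A) ** Z" using z2 by simp
  also have "Z ** A = adjoint A ** adjoint Z" using z4 by (simp add: adjoint_mult)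
  also have "adjoint A ** adjoint Z = (X ** A) ** (adjoint A ** adjoint Z)"
    using aA2 by (metis matrix_mul_assoc)
  also have "adjoint A ** adjoint Z = Z ** A" using z4 by (simp add: adjoint_mult)
  also have "(X ** A) ** (Z ** A) ** Z = X ** A ** (Z ** A ** Z)" by (simp add: matrix_mul_assoc)
  finally have ez: "Z = X ** A ** Z" using z2 by simp
  show ?thesis using ex ez by simp
qed

lemma pinv_MP: "MP A X \<Longrightarrow> MP A (pinv A)"
proof -
  assume a: "MP A X"
  have "pinv A = (THE X. MP A X)" unfolding pinv_def MP_def by simp
  also have "MP A (THE X. MP A X)" using a by (rule theI) (rule MP_unique[OF _ a])
  finally show ?thesis .
qed

lemma matrix_neg_right: "(A::complex^'n^'m) ** (- B) = - (A ** B)"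
  by (simp add: vec_eq_iff matrix_matrix_mult_def sum_negf)

lemma herm_factor:
  fixes A :: "complex^'n^'n" assumes h: "hermitian A"
  shows "\<exists>e::nat\<Rightarrow>real. \<exists>M. A = A ** A ** (\<Sum>j\<le>M. e j *\<^sub>R mpow A j)"
proof -
  obtain c :: "nat \<Rightarrow> real" and N where c: "\<exists>i. c i \<noteq> 0" "\<forall>i>N. c i = 0"
    "(\<Sum>i\<le>N. c i *\<^sub>R mpow A i) = 0" using pow_dep[of A] by blast
  define k where "k = (LEAST i. c i \<noteq> 0)"
  have ck: "c k \<noteq> 0" unfolding k_def using c(1) by (rule LeastI_ex)
  have below: "\<And>i. i < k \<Longrightarrow> c i = 0" unfolding k_def using not_less_Least by blast
  define g where "g i = c i *\<^sub>R mpow A i" for i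
  define d where "d j = c (k + j)" for j
  have "(\<Sum>i\<le>N. g i) = (\<Sum>i\<in>{..N+k}. g i)"
    by (rule sum.mono_neutral_left) (auto simp: g_def c(2))
  also have "\<dots> = (\<Sum>i\<in>{k..N+k}. g i)"
    by (rule sum.mono_neutral_right) (auto simp: g_def below)
  also have "\<dots> = (\<Sum>j\<in>{0..N}. g (j + k))"
    using sum.shift_bounds_cl_nat_ivl[of g 0 k N] by simp
  also have "\<dots> = (\<Sum>j\<le>N. mpow A k ** (d j *\<^sub>R mpow A j))"
    by (rule sum.cong) (simp_all add: atLeast0AtMost g_def d_def matrix_scalar_ac scalar_matrix_assoc[symmetric] mpow_add[symmetric] add.commute)
  also have "\<dots> = mpow A k ** (\<Sum>j\<le>N. d j *\<^sub>R mpow A j)" by (simp add: mult_sum_left)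
  finally have e1: "mpow A k ** (\<Sum>j\<le>N. d j *\<^sub>R mpow A j) = 0" using c(3) g_def by simp
  define R where "R = (\<Sum>j\<le>N. d (Suc j) *\<^sub>R mpow A j)"
  have "(\<Sum>j\<le>N. d j *\<^sub>R mpow A j) = (\<Sum>j\<le>Suc N. d j *\<^sub>R mpow A j)"
    by (rule sum.mono_neutral_left) (auto simp: d_def c(2))
  also have "\<dots> = c k *\<^sub>R mat 1 + A ** R"
    unfolding sum.atMost_Suc_shift R_def
    by (simp add: d_def mult_sum_left matrix_scalar_ac scalar_matrix_assoc[symmetric])
  finally have e2: "mpow A k ** (c k *\<^sub>R mat 1 + A ** R) = 0" using e1 by simp
  define T where "T = c k *\<^sub>R mat 1 + A ** R"
  have "A ** T = 0"
  proof (subst matrix_eq, intro allI)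
    fix v
    have "mpow A k *v (T *v v) = 0" using e2 unfolding T_def
      by (simp add: matrix_vector_mul_assoc)
    hence "A *v (T *v v) = 0"
    proof (cases k)
      case 0 thus ?thesis using \<open>mpow A k *v (T *v v) = 0\<close> by simp
    next
      case (Suc k') thus ?thesis using herm_ker_pow[OF h] \<open>mpow A k *v (T *v v) = 0\<close> by blast
    qed
    thus "(A ** T) *v v = 0 *v v" by (simp add: matrix_vector_mul_assoc)
  qed
  hence "c k *\<^sub>R A + (A ** A) ** R = 0"
    unfolding T_def by (simp add: matrix_add_ldistrib matrix_scalar_ac matrix_mul_assoc)
  hence "c k *\<^sub>R A = - ((A ** A) ** R)" by (simp add: eq_neg_iff_add_eq_0)
  hence ee: "c k *\<^sub>R A = - ((A ** A) ** R)" .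
  have "A = (1 / c k) *\<^sub>R (c k *\<^sub>R A)" using ck by simp
  also have "\<dots> = (1 / c k) *\<^sub>R (- ((A ** A) ** R))" by (simp only: ee)
  also have "\<dots> = A ** A ** ((- 1 / c k) *\<^sub>R R)"
    by (simp add: matrix_scalar_ac scalar_matrix_assoc[symmetric] matrix_neg_right)
  also have "(- 1 / c k) *\<^sub>R R = (\<Sum>j\<le>N. (- d (Suc j) / c k) *\<^sub>R mpow A j)"
    unfolding R_def scaleR_sum_right by (rule sum.cong) auto
  finally have "A = A ** A ** (\<Sum>j\<le>N. (\<lambda>j. - d (Suc j) / c k) j *\<^sub>R mpow A j)" .
  thus ?thesis by (intro exI[where x="\<lambda>j. - d (Suc j) / c k"] exI[where x=N])
qed




lemma herm_MP_exists:
  fixes A :: "complex^'n^'n" assumes h: "hermitian A"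
  shows "\<exists>X. MP A X"
proof -
  obtain e :: "nat \<Rightarrow> real" and M where fac: "A = A ** A ** (\<Sum>j\<le>M. e j *\<^sub>R mpow A j)"
    using herm_factor[OF h] by blast
  define Y where "Y = (\<Sum>j\<le>M. e j *\<^sub>R mpow A j)"
  have fac': "A ** A ** Y = A" using fac unfolding Y_def by simp
  have hA: "adjoint A = A" using h unfolding hermitian_def .
  have comm: "Y ** A = A ** Y"
    unfolding Y_def mult_sum_left mult_sum_right
    by (rule sum.cong) (simp_all add: matrix_scalar_ac scalar_matrix_assoc[symmetric] mpow_comm)
  have hY: "adjoint Y = Y"
    unfolding Y_def adjoint_sum by (rule sum.cong) (simp_all add: adjoint_scaleR mpow_herm[OF h])
  define E where "E = A ** Y"
  have f1: "A ** E = A" unfolding E_def using fac' by (simp add: matrix_mul_assoc)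
  have f2: "E ** A = A" unfolding E_def using fac' comm by (metis matrix_mul_assoc)
  have f3: "E ** E = E"
  proof -
    have "E ** E = (E ** A) ** Y" unfolding E_def by (simp add: matrix_mul_assoc)
    also have "\<dots> = A ** Y" by (simp only: f2)
    finally show ?thesis unfolding E_def .
  qed
  have f4: "adjoint E = E" unfolding E_def using hA hY comm by (simp add: adjoint_mult)
  have f5: "Y ** A = E" unfolding E_def by (rule comm)
  define X where "X = E ** Y"
  have m1: "A ** X ** A = A"
  proof -
    have "A ** X ** A = (A ** E) ** (Y ** A)" unfolding X_def by (simp add: matrix_mul_assoc)
    also have "\<dots> = A" by (simp add: f1 f5)
    finally show ?thesis .
  qed
  have m3: "A ** X = E"
  proof -
    have "A ** X = (A ** E) ** Y" unfolding X_def by (simp add: matrix_mul_assoc)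
    also have "\<dots> = A ** Y" by (simp only: f1)
    finally show ?thesis unfolding E_def .
  qed
  have m4: "X ** A = E"
  proof -
    have "X ** A = E ** (Y ** A)" unfolding X_def by (simp add: matrix_mul_assoc)
    thus ?thesis by (simp add: f5 f3)
  qed
  have m2: "X ** A ** X = X"
  proof -
    have "X ** A ** X = E ** X" by (simp add: m4)
    also have "\<dots> = (E ** E) ** Y" unfolding X_def by (simp add: matrix_mul_assoc)
    finally show ?thesis by (simp add: f3 X_def)
  qed
  have "MP A X" unfolding MP_def using m1 m2 m3 m4 f4 by simp
  thus ?thesis ..
qed

lemma pinv_herm: "hermitian A \<Longrightarrow> MP A (pinv A)"
  using herm_MP_exists pinv_MP by blast




lemma mtrace_form:
  "mtrace (adjoint B ** S ** D) = (\<Sum>j\<in>UNIV. braket (column j B) (S *v column j D))"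
  unfolding mtrace_def
proof (rule sum.cong[OF refl])
  fix j
  have "(adjoint B ** S ** D) $ j $ j = (\<Sum>k\<in>UNIV. \<Sum>i\<in>UNIV. cnj (B$i$j) * (S$i$k * D$k$j))"
    unfolding matrix_matrix_mult_def by (simp add: sum_distrib_right mult.assoc)
  also have "\<dots> = (\<Sum>i\<in>UNIV. \<Sum>k\<in>UNIV. cnj (B$i$j) * (S$i$k * D$k$j))" by (rule sum.swap)
  also have "\<dots> = braket (column j B) (S *v column j D)"
    unfolding braket_def matrix_vector_mult_def column_def by (simp add: sum_distrib_left)
  finally show "(adjoint B ** S ** D) $ j $ j = braket (column j B) (S *v column j D)" .
qed

lemma mtrace_form_nonneg:
  assumes "\<forall>x. Re (braket x (S *v x)) \<ge> 0"
  shows "Re (mtrace (adjoint D ** S ** D)) \<ge> 0"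
  unfolding mtrace_form Re_sum using assms by (intro sum_nonneg) blast

lemma mtrace_form_cnj:
  assumes "hermitian S"
  shows "cnj (mtrace (adjoint B ** S ** D)) = mtrace (adjoint D ** S ** B)"
  using assms unfolding hermitian_def
  by (simp add: mtrace_adjoint[symmetric] adjoint_mult matrix_mul_assoc)

lemma purity_var:
  fixes \<sigma> H C :: "complex^'n^'n"
  assumes hs: "hermitian \<sigma>" and ps: "\<forall>x. Re (braket x (\<sigma> *v x)) \<ge> 0" and hH: "hermitian H"
    and sp: "supp (H ** \<sigma> ** H) \<subseteq> supp \<sigma>"
  shows "2 * Re (mtrace (adjoint C ** (H ** \<sigma> - \<sigma> ** H))) - Re (mtrace (adjoint C ** \<sigma> ** C))
         \<le> Re (mtrace (H ** \<sigma> ** \<sigma> ** H ** pinv \<sigma>) - mtrace (\<sigma> ** H ** H))"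
proof -
  define X where "X = pinv \<sigma>"
  have mp: "MP \<sigma> X" unfolding X_def by (rule pinv_herm[OF hs])
  have x1: "\<sigma> ** X ** \<sigma> = \<sigma>" and x3: "adjoint (\<sigma> ** X) = \<sigma> ** X"
    using mp unfolding MP_def by auto
  have as: "adjoint \<sigma> = \<sigma>" using hs unfolding hermitian_def .
  have aH: "adjoint H = H" using hH unfolding hermitian_def .
  define P where "P = \<sigma> ** X"
  have aP: "adjoint P = P" unfolding P_def by (rule x3)
  have Ps: "P ** \<sigma> = \<sigma>" unfolding P_def by (rule x1)
  have a: "P ** (H ** \<sigma> ** H) = H ** \<sigma> ** H"
  proof (subst matrix_eq, intro allI)
    fix z
    have "(H ** \<sigma> ** H) *v z \<in> supp \<sigma>" using sp unfolding supp_def by auto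
    then obtain u where u: "(H ** \<sigma> ** H) *v z = \<sigma> *v u" unfolding supp_def by auto
    have "(P ** (H ** \<sigma> ** H)) *v z = P *v (\<sigma> *v u)"
      by (metis matrix_vector_mul_assoc u)
    also have "\<dots> = \<sigma> *v u" by (simp add: matrix_vector_mul_assoc Ps)
    finally show "(P ** (H ** \<sigma> ** H)) *v z = (H ** \<sigma> ** H) *v z" using u by simp
  qed
  define G where "G = (mat 1 - P) ** H"
  have aG: "adjoint G = H ** (mat 1 - P)"
    unfolding G_def by (simp add: adjoint_mult adjoint_diff aP aH)
  have GsH: "G ** \<sigma> ** H = 0"
    unfolding G_def using a by (simp add: matrix_diff_rdistrib matrix_mul_assoc)
  have GsG: "G ** \<sigma> ** adjoint G = 0"
  proof -
    have "G ** \<sigma> ** adjoint G = (G ** \<sigma> ** H) ** (mat 1 - P)" by (simp add: aG matrix_mul_assoc)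
    thus ?thesis using GsH by simp
  qed
  have sG: "\<sigma> ** adjoint G = 0"
  proof (subst matrix_eq, intro allI)
    fix x
    have "braket x ((G ** \<sigma> ** adjoint G) *v x) = braket x (G *v (\<sigma> *v (adjoint G *v x)))"
      by (simp add: matrix_vector_mul_assoc matrix_mul_assoc)
    also have "\<dots> = braket (adjoint G *v x) (\<sigma> *v (adjoint G *v x))" by (rule braket_adj)
    finally have "braket (adjoint G *v x) (\<sigma> *v (adjoint G *v x)) = braket x ((G ** \<sigma> ** adjoint G) *v x)" ..
    also have "\<dots> = 0" using GsG by simp
    finally have "\<sigma> *v (adjoint G *v x) = 0" by (intro psd_null[OF hs ps]) simp
    thus "(\<sigma> ** adjoint G) *v x = 0 *v x" by (simp add: matrix_vector_mul_assoc)
  qed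
  have Gs: "G ** \<sigma> = 0"
  proof -
    have "G ** \<sigma> = adjoint (\<sigma> ** adjoint G)" by (simp add: adjoint_mult as)
    thus ?thesis using sG by simp
  qed
  define Y where "Y = X ** H ** \<sigma>"
  have HsY: "H ** \<sigma> = \<sigma> ** Y"
  proof -
    have "H ** \<sigma> - P ** H ** \<sigma> = G ** \<sigma>" unfolding G_def by (simp add: matrix_diff_rdistrib)
    hence "H ** \<sigma> = P ** H ** \<sigma>" using Gs by simp
    thus ?thesis unfolding P_def Y_def by (simp add: matrix_mul_assoc)
  qed
  have sH: "\<sigma> ** H = adjoint Y ** \<sigma>"
  proof -
    have "\<sigma> ** H = adjoint (H ** \<sigma>)" by (simp add: adjoint_mult as aH)
    also have "\<dots> = adjoint Y ** \<sigma>" by (simp add: HsY adjoint_mult as)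
    finally show ?thesis .
  qed
  have t1: "mtrace (H ** \<sigma> ** \<sigma> ** H ** X) = mtrace (adjoint Y ** \<sigma> ** Y)"
  proof -
    have "mtrace (H ** \<sigma> ** \<sigma> ** H ** X) = mtrace ((H ** \<sigma>) ** (\<sigma> ** H ** X))"
      by (simp add: matrix_mul_assoc)
    also have "\<dots> = mtrace ((\<sigma> ** H ** X) ** (H ** \<sigma>))" by (rule mtrace_comm)
    also have "(\<sigma> ** H ** X) ** (H ** \<sigma>) = adjoint Y ** (\<sigma> ** X ** \<sigma>) ** Y"
      by (simp add: sH HsY matrix_mul_assoc)
    finally show ?thesis using x1 by simp
  qed
  define tf where "tf B D = mtrace (adjoint B ** \<sigma> ** D)" for B D :: "complex^'n^'n"
  have tfc: "Re (tf D B) = Re (tf B D)" for B D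
  proof -
    have c: "cnj (tf B D) = tf D B" unfolding tf_def by (rule mtrace_form_cnj[OF hs])
    have "Re (tf D B) = Re (cnj (tf B D))" by (simp only: c)
    thus ?thesis by simp
  qed
  define B where "B = H + C"
  have nn: "Re (tf (Y - B) (Y - B)) \<ge> 0" unfolding tf_def by (rule mtrace_form_nonneg[OF ps])
  have exp: "tf (Y - B) (Y - B) = tf Y Y - tf Y B - tf B Y + tf B B"
    unfolding tf_def by (simp add: adjoint_diff matrix_diff_ldistrib matrix_diff_rdistrib mtrace_diff)
  have tBY: "tf B Y = mtrace (\<sigma> ** H ** H) + mtrace (adjoint C ** H ** \<sigma>)"
  proof -
    have "tf B Y = mtrace (adjoint B ** (H ** \<sigma>))" unfolding tf_def by (simp add: HsY matrix_mul_assoc)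
    also have "\<dots> = mtrace (H ** H ** \<sigma>) + mtrace (adjoint C ** H ** \<sigma>)"
      unfolding B_def by (simp add: adjoint_add aH matrix_add_rdistrib mtrace_add matrix_mul_assoc)
    also have "mtrace (H ** H ** \<sigma>) = mtrace (\<sigma> ** H ** H)"
      using mtrace_comm[of "H ** H" \<sigma>] by (simp add: matrix_mul_assoc)
    finally show ?thesis .
  qed
  have tBB: "tf B B = mtrace (\<sigma> ** H ** H) + tf H C + tf C H + tf C C"
  proof -
    have "tf B B = tf H H + tf H C + tf C H + tf C C"
      unfolding tf_def B_def by (simp add: adjoint_add matrix_add_ldistrib matrix_add_rdistrib mtrace_add)
    moreover have "tf H H = mtrace (\<sigma> ** H ** H)"
      unfolding tf_def using mtrace_comm[of H "\<sigma> ** H"] by (simp add: aH matrix_mul_assoc)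
    ultimately show ?thesis by simp
  qed
  have tCH: "tf C H = mtrace (adjoint C ** \<sigma> ** H)" unfolding tf_def ..
  have comm_expand: "mtrace (adjoint C ** (H ** \<sigma> - \<sigma> ** H)) =
      mtrace (adjoint C ** H ** \<sigma>) - mtrace (adjoint C ** \<sigma> ** H)"
    by (simp add: matrix_diff_ldistrib mtrace_diff matrix_mul_assoc)
  have "Re (tf Y Y) \<ge> 2 * Re (tf B Y) - Re (tf B B)"
    using nn exp tfc[of B Y] by simp
  hence "Re (tf Y Y) \<ge> 2 * Re (mtrace (adjoint C ** H ** \<sigma>)) - 2 * Re (mtrace (adjoint C ** \<sigma> ** H))
       - Re (tf C C) + Re (mtrace (\<sigma> ** H ** H))"
    using tBY tBB tfc[of C H] tCH by simp
  thus ?thesis using t1 comm_expand unfolding X_def tf_def by simp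
qed




lemma sv_scaleR: "r *\<^sub>R (y::complex^'n) = complex_of_real r *s y"
  by (simp add: vec_eq_iff complex_eq_iff)

lemma perp_bound:
  fixes \<sigma> :: "complex^'n^'n" and \<Phi> y :: "complex^'n" and p :: real
  assumes hs: "hermitian \<sigma>" and ps: "\<forall>x. Re (braket x (\<sigma> *v x)) \<ge> 0"
    and tr: "mtrace \<sigma> = 1" and n\<Phi>: "braket \<Phi> \<Phi> = 1"
    and eig: "\<sigma> *v \<Phi> = of_real p *s \<Phi>" and y: "braket \<Phi> y = 0"
  shows "Re (braket y (\<sigma> *v y)) \<le> (1 - p) * Re (braket y y)"
proof -
  define M where "M = \<sigma> - p *\<^sub>R outer \<Phi> \<Phi>"
  have Mx: "braket x (M *v x) = braket x (\<sigma> *v x) - of_real p * (braket \<Phi> x * braket x \<Phi>)" for x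
    unfolding M_def
    by (simp add: matrix_vector_mult_diff_rdistrib scaleR_matrix_vector outer_mv braket_diff_right
        sv_scaleR braket_smult_right mult_ac)
  have hM: "hermitian M"
    using hs unfolding hermitian_def M_def by (simp add: adjoint_diff adjoint_scaleR adjoint_outer)
  have pM: "\<forall>x. Re (braket x (M *v x)) \<ge> 0"
  proof
    fix x
    define \<alpha> where "\<alpha> = braket \<Phi> x"
    define z where "z = x - \<alpha> *s \<Phi>"
    have z0: "braket \<Phi> z = 0" unfolding z_def \<alpha>_def by (simp add: braket_diff_right braket_smult_right n\<Phi>)
    have xz: "x = z + \<alpha> *s \<Phi>" unfolding z_def by simp
    have zs: "braket z (\<sigma> *v \<Phi>) = 0"
    proof -
      have "braket z (\<sigma> *v \<Phi>) = of_real p * cnj (braket \<Phi> z)"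
        by (simp add: eig braket_smult_right braket_cnj)
      thus ?thesis using z0 by simp
    qed
    have sz: "braket \<Phi> (\<sigma> *v z) = 0" using herm_form_cnj[OF hs, of z \<Phi>] zs by simp
    have pp: "braket \<Phi> (\<sigma> *v \<Phi>) = of_real p" by (simp add: eig braket_smult_right n\<Phi>)
    have "braket x (\<sigma> *v x) = braket z (\<sigma> *v z) + \<alpha> * braket z (\<sigma> *v \<Phi>)
        + cnj \<alpha> * braket \<Phi> (\<sigma> *v z) + cnj \<alpha> * \<alpha> * braket \<Phi> (\<sigma> *v \<Phi>)"
      unfolding xz by (rule form_expand)
    hence e: "braket x (\<sigma> *v x) = braket z (\<sigma> *v z) + cnj \<alpha> * \<alpha> * of_real p"
      using zs sz pp by simp
    have "braket x \<Phi> = cnj \<alpha>" unfolding \<alpha>_def by (simp add: braket_cnj)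
    hence "braket x (M *v x) = braket z (\<sigma> *v z)" using Mx[of x] e unfolding \<alpha>_def[symmetric]
      by (simp add: mult_ac)
    thus "Re (braket x (M *v x)) \<ge> 0" using ps by simp
  qed
  have trM: "mtrace M = 1 - of_real p"
    unfolding M_def by (simp add: mtrace_diff mtrace_scaleR mtrace_outer n\<Phi> tr)
  have "Re (braket y (M *v y)) \<le> Re (mtrace M) * Re (braket y y)" by (rule psd_trace_bound[OF hM pM])
  moreover have "braket y (M *v y) = braket y (\<sigma> *v y)" using Mx[of y] y by simp
  ultimately show ?thesis using trM by simp
qed




lemma final_real:
  fixes p V W :: real
  assumes p: "1/2 < p" "p < 1" and V: "V \<ge> 0" and W: "(2*p - 1)^2 * V \<le> W"
  shows "V * (p^2 / (1 - p) - 1) \<le> (1/p + 1/(1-p)) * W"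
proof -
  have q: "1 - p > 0" "p > 0" using p by auto
  have e1: "p^2/(1-p) - 1 = p*(p^2 + p - 1)/(p*(1-p))" using q by (simp add: field_simps power2_eq_square)
  have e2: "(1/p + 1/(1-p)) * (2*p-1)^2 = (2*p-1)^2 / (p*(1-p))" using q by (simp add: field_simps)
  have num: "p*(p^2 + p - 1) \<le> (2*p-1)^2"
  proof -
    have "(2*p-1)^2 - p*(p^2 + p - 1) = (1-p)^3" by (simp add: power2_eq_square power3_eq_cube algebra_simps)
    moreover have "(1-p)^3 \<ge> 0" using q by simp
    ultimately show ?thesis by linarith
  qed
  have "(p^2 / (1 - p) - 1) \<le> (1/p + 1/(1-p)) * (2*p - 1)^2"
    unfolding e1 e2 using q num by (intro divide_right_mono) auto
  hence "V * (p^2 / (1 - p) - 1) \<le> V * ((1/p + 1/(1-p)) * (2*p - 1)^2)"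
    using V by (rule mult_left_mono)
  also have "\<dots> = (1/p + 1/(1-p)) * ((2*p - 1)^2 * V)" by simp
  also have "\<dots> \<le> (1/p + 1/(1-p)) * W" using W q by (intro mult_left_mono) auto
  finally show ?thesis .
qed

lemma braket_neg_left: "braket (- x) y = - braket x y"
  by (simp add: braket_def sum_negf)

lemma braket_neg_right: "braket x (- y) = - braket x y"
  by (simp add: braket_def sum_negf)

lemma main_inner:
  fixes \<sigma> H :: "complex^'n^'n" and \<Phi> :: "complex^'n" and p :: real
  assumes hs: "hermitian \<sigma>" and ps: "\<forall>x. Re (braket x (\<sigma> *v x)) \<ge> 0" and tr: "mtrace \<sigma> = 1"
    and hH: "hermitian H" and n\<Phi>: "braket \<Phi> \<Phi> = 1"
    and eig: "\<sigma> *v \<Phi> = of_real p *s \<Phi>" and p1: "p < 1"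
    and sp: "supp (H ** \<sigma> ** H) \<subseteq> supp \<sigma>"
  shows "variance H \<Phi> * (p\<^sup>2 / (1 - p) - 1)
     \<le> Re (mtrace (H ** \<sigma> ** \<sigma> ** H ** pinv \<sigma>) - mtrace (\<sigma> ** H ** H))"
proof -
  define Pv where "Pv = Re (mtrace (H ** \<sigma> ** \<sigma> ** H ** pinv \<sigma>) - mtrace (\<sigma> ** H ** H))"
  define K where "K = H ** \<sigma> - \<sigma> ** H"
  have var: "2 * Re (mtrace (adjoint C ** K)) - Re (mtrace (adjoint C ** \<sigma> ** C)) \<le> Pv" for C
    unfolding Pv_def K_def by (rule purity_var[OF hs ps hH sp])
  have aH: "adjoint H = H" using hH unfolding hermitian_def .
  have as: "adjoint \<sigma> = \<sigma>" using hs unfolding hermitian_def .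
  define \<mu> where "\<mu> = braket \<Phi> (H *v \<Phi>)"
  define v where "v = H *v \<Phi> - \<mu> *s \<Phi>"
  define w where "w = of_real p *s v - \<sigma> *v v"
  have pp: "braket \<Phi> (\<sigma> *v \<Phi>) = of_real p" by (simp add: eig braket_smult_right n\<Phi>)
  have p0: "p \<ge> 0" using ps pp by (metis Re_complex_of_real)
  have v0: "braket \<Phi> v = 0" unfolding v_def \<mu>_def by (simp add: braket_diff_right braket_smult_right n\<Phi>)
  have \<Phi>sv: "braket \<Phi> (\<sigma> *v y) = of_real p * braket \<Phi> y" for y
  proof -
    have "braket \<Phi> (\<sigma> *v y) = braket (\<sigma> *v \<Phi>) y" by (simp add: braket_adj as)
    thus ?thesis by (simp add: eig braket_smult_left)
  qed
  have w0: "braket \<Phi> w = 0" unfolding w_def by (simp add: braket_diff_right braket_smult_right v0 \<Phi>sv)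
  have w0': "braket w \<Phi> = 0" using w0 braket_cnj[of \<Phi> w] by simp
  have Kphi: "K *v \<Phi> = w"
    unfolding K_def w_def v_def
    by (simp add: matrix_vector_mult_diff_rdistrib matrix_vector_mul_assoc[symmetric] eig
        matrix_vector_smult matrix_vector_mult_diff_distrib vec_eq_iff algebra_simps)
  have aK: "adjoint K *v \<Phi> = - w"
  proof -
    have "adjoint K = \<sigma> ** H - H ** \<sigma>" unfolding K_def by (simp add: adjoint_diff adjoint_mult aH as)
    hence "adjoint K *v \<Phi> = - (K *v \<Phi>)" unfolding K_def
      by (simp add: matrix_vector_mult_diff_rdistrib)
    thus ?thesis using Kphi by simp
  qed
  have \<Phi>Kw: "braket \<Phi> (K *v w) = - braket w w"
    by (simp add: braket_adj aK braket_neg_left)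
  have bound: "Pv \<ge> 2 * (a + b) * Re (braket w w) - b^2 * Re (braket w (\<sigma> *v w))
      - a^2 * p * Re (braket w w)" for a b :: real
  proof -
    define C where "C = outer (of_real b *s w) \<Phi> - outer \<Phi> (of_real a *s w)"
    have aC: "adjoint C = outer \<Phi> (of_real b *s w) - outer (of_real a *s w) \<Phi>"
      unfolding C_def by (simp add: adjoint_diff adjoint_outer)
    have t1: "mtrace (adjoint C ** K) = of_real (a + b) * braket w w"
      unfolding aC by (simp add: matrix_diff_rdistrib mtrace_diff mtrace_outer_mult Kphi
          braket_smult_left braket_smult_right matrix_vector_smult \<Phi>Kw algebra_simps)
    have sC: "\<sigma> ** C = outer (\<sigma> *v (of_real b *s w)) \<Phi> - outer (\<sigma> *v \<Phi>) (of_real a *s w)"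
      unfolding C_def by (simp add: matrix_diff_ldistrib mult_outer)
    have t2: "mtrace (adjoint C ** \<sigma> ** C) = of_real (b^2) * braket w (\<sigma> *v w) + of_real (a^2 * p) * braket w w"
    proof -
      have "mtrace (adjoint C ** \<sigma> ** C) = mtrace (adjoint C ** (\<sigma> ** C))" by (simp add: matrix_mul_assoc)
      also have "\<dots> = of_real (b^2) * braket w (\<sigma> *v w) + of_real (a^2 * p) * braket w w"
        unfolding aC sC
        by (simp add: matrix_diff_rdistrib mtrace_diff mtrace_outer_mult outer_mv
          matrix_vector_mult_diff_rdistrib braket_diff_right braket_diff_left
          braket_smult_left braket_smult_right matrix_vector_smult eig n\<Phi> w0 w0' power2_eq_square braket_neg_right
          algebra_simps)
      finally show ?thesis .
    qed
    have "2 * Re (mtrace (adjoint C ** K)) - Re (mtrace (adjoint C ** \<sigma> ** C)) \<le> Pv" by (rule var)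
    thus ?thesis unfolding t1 t2 by (simp add: algebra_simps)
  qed
  define W where "W = Re (braket w w)"
  define V where "V = Re (braket v v)"
  have V0: "V \<ge> 0" unfolding V_def by (rule braket_self_Re)
  have W0: "W \<ge> 0" unfolding W_def by (rule braket_self_Re)
  have S: "Re (braket w (\<sigma> *v w)) \<le> (1 - p) * W"
    unfolding W_def by (rule perp_bound[OF hs ps tr n\<Phi> eig w0])
  have Sv: "Re (braket v (\<sigma> *v v)) \<le> (1 - p) * V"
    unfolding V_def by (rule perp_bound[OF hs ps tr n\<Phi> eig v0])
  have varV: "variance H \<Phi> = V"
  proof -
    have hh: "braket \<Phi> ((H ** H) *v \<Phi>) = braket (H *v \<Phi>) (H *v \<Phi>)"
      by (simp add: matrix_vector_mul_assoc[symmetric] braket_adj aH)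
    have mr: "\<mu> = of_real (Re \<mu>)" unfolding \<mu>_def by (rule herm_form_real[OF hH])
    have im: "Im \<mu> = 0" using mr by (metis Im_complex_of_real)
    have c1: "braket (H *v \<Phi>) \<Phi> = cnj \<mu>" unfolding \<mu>_def by (simp add: braket_cnj)
    have "braket v v = braket (H *v \<Phi>) (H *v \<Phi>) - cnj \<mu> * \<mu>"
      unfolding v_def by (simp add: braket_diff_right braket_diff_left braket_smult_right
          braket_smult_left c1 n\<Phi> \<mu>_def[symmetric] algebra_simps)
    also have "cnj \<mu> * \<mu> = of_real ((Re \<mu>)^2)" by (simp add: complex_eq_iff power2_eq_square im)
    finally have bv: "braket v v = braket (H *v \<Phi>) (H *v \<Phi>) - of_real ((Re \<mu>)^2)" .
    have "V = Re (braket (H *v \<Phi>) (H *v \<Phi>)) - (Re \<mu>)^2" unfolding V_def bv by simp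
    moreover have "variance H \<Phi> = Re (braket (H *v \<Phi>) (H *v \<Phi>)) - (Re \<mu>)^2"
      unfolding variance_def hh \<mu>_def ..
    ultimately show ?thesis by simp
  qed
  show ?thesis
  proof (cases "p\<^sup>2 / (1 - p) - 1 \<le> 0")
    case True
    have "Pv \<ge> 0" using bound[of 0 0] by simp
    moreover have "variance H \<Phi> * (p\<^sup>2 / (1 - p) - 1) \<le> 0"
      using True V0 varV by (simp add: mult_nonneg_nonpos)
    ultimately show ?thesis unfolding Pv_def by linarith
  next
    case False
    have q: "1 - p > 0" using p1 by simp
    have gt: "p^2 > 1 - p" using False q by (simp add: field_simps)
    have ph: "p > 1/2"
    proof (rule ccontr)
      assume "\<not> p > 1/2" hence le: "p \<le> 1/2" by simp
      hence "p^2 \<le> (1/2)^2" using p0 by (intro power_mono) auto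
      thus False using gt le by (simp add: power2_eq_square)
    qed
    have pos: "p > 0" using ph by simp
    have "Pv \<ge> 2 * (1/p + 1/(1-p)) * W - (1/(1-p))^2 * Re (braket w (\<sigma> *v w)) - (1/p)^2 * p * W"
      using bound[of "1/p" "1/(1-p)"] unfolding W_def .
    moreover have "(1/(1-p))^2 * Re (braket w (\<sigma> *v w)) \<le> (1/(1-p))^2 * ((1 - p) * W)"
      using S by (intro mult_left_mono) auto
    ultimately have "Pv \<ge> 2 * (1/p + 1/(1-p)) * W - (1/(1-p))^2 * ((1 - p) * W) - (1/p)^2 * p * W"
      by linarith
    also have "2 * (1/p + 1/(1-p)) * W - (1/(1-p))^2 * ((1 - p) * W) - (1/p)^2 * p * W
        = (1/p + 1/(1-p)) * W"
    proof -
      have e1: "(1/(1-p))^2 * ((1 - p) * W) = (1/(1-p)) * W" using q by (simp add: power2_eq_square)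
      have e2: "(1/p)^2 * p * W = (1/p) * W" using pos by (simp add: power2_eq_square)
      show ?thesis unfolding e1 e2 by (simp add: algebra_simps)
    qed
    finally have P1: "Pv \<ge> (1/p + 1/(1-p)) * W" .
    have WV: "(2*p - 1)^2 * V \<le> W"
    proof -
      have vw: "braket v w = of_real p * braket v v - braket v (\<sigma> *v v)"
        unfolding w_def by (simp add: braket_diff_right braket_smult_right)
      have r: "Re (braket v w) \<ge> (2*p - 1) * V"
        using Sv unfolding vw V_def by (simp add: algebra_simps)
      have r0: "(2*p - 1) * V \<ge> 0" using ph V0 by simp
      have "((2*p - 1) * V)^2 \<le> (Re (braket v w))^2" using r r0 by (intro power_mono) auto
      also have "\<dots> \<le> (cmod (braket v w))^2"
        using abs_Re_le_cmod[of "braket v w"] by (metis abs_ge_zero power2_abs power_mono)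
      also have "\<dots> \<le> V * W" unfolding V_def W_def by (rule braket_cs)
      finally have "V * ((2*p - 1)^2 * V) \<le> V * W" by (simp add: power2_eq_square mult_ac)
      thus ?thesis using V0 W0
        by (cases "V = 0") (auto simp: mult_le_cancel_left)
    qed
    have "V * (p^2 / (1 - p) - 1) \<le> (1/p + 1/(1-p)) * W"
      by (rule final_real[OF ph p1 V0 WV])
    thus ?thesis using P1 varV unfolding Pv_def by simp
  qed
qed


theorem mainTheorem17:
  fixes \<sigma> H :: "complex^'n^'n" and \<Phi> :: "complex^'n" and pmax :: real
  assumes "density_operator \<sigma>"
    and "hermitian H"
    and "braket \<Phi> \<Phi> = 1"
    and "\<sigma> *v \<Phi> = of_real pmax *s \<Phi>"
    and "\<forall>l v. v \<noteq> 0 \<and> \<sigma> *v v = l *s v \<longrightarrow> Re l \<le> pmax"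
    and "pmax < 1"
  shows "purity_coh H \<sigma> \<ge> ereal (variance H \<Phi> * (pmax\<^sup>2 / (1 - pmax) - 1))"
proof -
  have hs: "hermitian \<sigma>" and ps0: "\<forall>x. Im (braket x (\<sigma> *v x)) = 0 \<and> Re (braket x (\<sigma> *v x)) \<ge> 0"
    and tr: "mtrace \<sigma> = 1"
    using assms(1) unfolding density_operator_def positive_semidef_def by auto
  have ps: "\<forall>x. Re (braket x (\<sigma> *v x)) \<ge> 0" using ps0 by blast
  show ?thesis
  proof (cases "supp (H ** \<sigma> ** H) \<subseteq> supp \<sigma>")
    case True
    have "variance H \<Phi> * (pmax\<^sup>2 / (1 - pmax) - 1)
       \<le> Re (mtrace (H ** \<sigma> ** \<sigma> ** H ** pinv \<sigma>) - mtrace (\<sigma> ** H ** H))"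
      by (rule main_inner[OF hs ps tr assms(2) assms(3) assms(4) assms(6) True])
    thus ?thesis unfolding purity_coh_def using True by simp
  next
    case False thus ?thesis unfolding purity_coh_def by simp
  qed
qed

end
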